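(* Under the standing assumptions below, the family $\mathcal U=\{I(\mathcal P):\mathcal P \text{ a finite partition of } \lambda\}$ is an ultrafilter on $\lambda$.
   Context: Standing assumptions: $G$ is a finite graph with at least one edge which is trivially power-colorable (for every positive integer $n$, every $\chi(G)$-coloring of $G^n$ is of the form $v\mapsto\phi(v_i)$ for some coordinate $i$ and proper coloring $\phi$ of $G$), $k=\chi(G)$, $\lambda$ is an infinite cardinal, and $\Phi$ is a fixed proper $k$-coloring of $G^\lambda$ (vertex set $V(G)^\lambda$, $(v_\xi)$ adjacent to $(w_\xi)$ iff $v_\xi w_\xi\in E(G)$ for all $\xi<\lambda$). A finite partition of $\lambda$ is a partition of $\lambda$ into finitely many nonempty pieces. For a finite partition $\mathcal P$, $V_{\mathcal P}=\{\mathbf v\in V(G^\lambda): \mathbf v\restriction A \text{ is constant for each } A\in\mathcal P\}$, and for $\mathbf v\in V_{\mathcal P}$, $A\in\mathcal P$, $\mathbf v_A$ is the constant value of $\mathbf v$ on $A$. If $\mathcal P=\{A_1,\dots,A_n\}$, the induced subgraph on $V_{\mathcal P}$ is isomorphic to $G^n$ via $\mathbf v\mapsto(\mathbf v_{A_1},\dots,\mathbf v_{A_n})$, so there are $i$ and a proper coloring $\phi$ of $G$ with $\Phi(\mathbf v)=\phi(\mathbf v_{A_i})$ for all $\mathbf v\in V_{\mathcal P}$; since $G$ has an edge, $A_i$ is uniquely determined and is denoted $I(\mathcal P)$. *)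

theory Defs
  imports Main "HOL-Library.Disjoint_Sets"
begin

definition simple_graph :: "('v \<Rightarrow> 'v \<Rightarrow> bool) \<Rightarrow> bool" where
  "simple_graph E \<longleftrightarrow> (\<forall>a b. E a b \<longrightarrow> E b a) \<and> (\<forall>a. \<not> E a a)"

definition proper_coloring :: "('v \<Rightarrow> 'v \<Rightarrow> bool) \<Rightarrow> nat \<Rightarrow> ('v \<Rightarrow> nat) \<Rightarrow> bool" where
  "proper_coloring E k c \<longleftrightarrow> (\<forall>a. c a < k) \<and> (\<forall>a b. E a b \<longrightarrow> c a \<noteq> c b)"

definition chromatic_number :: "('v \<Rightarrow> 'v \<Rightarrow> bool) \<Rightarrow> nat" where
  "chromatic_number E = (LEAST k. \<exists>c. proper_coloring E k c)"

text \<open>The n-th power G^n: vertices are lists of length n, adjacency coordinatewise.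
  A proper k-colouring of G^n.\<close>
definition power_coloring :: "('v \<Rightarrow> 'v \<Rightarrow> bool) \<Rightarrow> nat \<Rightarrow> nat \<Rightarrow> ('v list \<Rightarrow> nat) \<Rightarrow> bool" where
  "power_coloring E n k c \<longleftrightarrow>
     (\<forall>v. length v = n \<longrightarrow> c v < k) \<and>
     (\<forall>v w. length v = n \<longrightarrow> length w = n \<longrightarrow> list_all2 E v w \<longrightarrow> c v \<noteq> c w)"

definition trivially_power_colorable :: "('v \<Rightarrow> 'v \<Rightarrow> bool) \<Rightarrow> bool" where
  "trivially_power_colorable E \<longleftrightarrow>
     (\<forall>n>0. \<forall>c. power_coloring E n (chromatic_number E) c \<longrightarrow>
        (\<exists>i<n. \<exists>\<phi>. proper_coloring E (chromatic_number E) \<phi> \<and>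
            (\<forall>v. length v = n \<longrightarrow> c v = \<phi> (v ! i))))"

text \<open>Proper k-colouring of G^lambda, lambda being the (infinite) index type 'l.\<close>
definition big_power_coloring :: "('v \<Rightarrow> 'v \<Rightarrow> bool) \<Rightarrow> nat \<Rightarrow> (('l \<Rightarrow> 'v) \<Rightarrow> nat) \<Rightarrow> bool" where
  "big_power_coloring E k \<Phi> \<longleftrightarrow>
     (\<forall>v. \<Phi> v < k) \<and> (\<forall>v w. (\<forall>x. E (v x) (w x)) \<longrightarrow> \<Phi> v \<noteq> \<Phi> w)"

definition finite_partition :: "'l set set \<Rightarrow> bool" where
  "finite_partition P \<longleftrightarrow> finite P \<and> partition_on UNIV P"

definition V_part :: "'l set set \<Rightarrow> ('l \<Rightarrow> 'v) set" where
  "V_part P = {v. \<forall>A\<in>P. \<exists>c. \<forall>x\<in>A. v x = c}"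

text \<open>The constant value v_A of v on a nonempty piece A.\<close>
definition val_on :: "('l \<Rightarrow> 'v) \<Rightarrow> 'l set \<Rightarrow> 'v" where
  "val_on v A = v (SOME x. x \<in> A)"

definition I_part :: "('v \<Rightarrow> 'v \<Rightarrow> bool) \<Rightarrow> (('l \<Rightarrow> 'v) \<Rightarrow> nat) \<Rightarrow> 'l set set \<Rightarrow> 'l set" where
  "I_part E \<Phi> P = (THE A. A \<in> P \<and> (\<exists>\<phi>. proper_coloring E (chromatic_number E) \<phi> \<and>
                         (\<forall>v\<in>V_part P. \<Phi> v = \<phi> (val_on v A))))"

definition ultrafilter_on :: "'l set \<Rightarrow> 'l set set \<Rightarrow> bool" where
  "ultrafilter_on L U \<longleftrightarrow>
     U \<subseteq> Pow L \<and> L \<in> U \<and> {} \<notin> U \<and>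
     (\<forall>A B. A \<in> U \<longrightarrow> A \<subseteq> B \<longrightarrow> B \<subseteq> L \<longrightarrow> B \<in> U) \<and>
     (\<forall>A B. A \<in> U \<longrightarrow> B \<in> U \<longrightarrow> A \<inter> B \<in> U) \<and>
     (\<forall>A. A \<subseteq> L \<longrightarrow> A \<in> U \<or> L - A \<in> U)"

end

theory Submission
  imports Defs
begin

lemma part_disj:
  assumes "partition_on UNIV Q" "B \<in> Q" "C \<in> Q" "B \<noteq> C"
  shows "B \<inter> C = {}"
  using partition_onD2[OF assms(1)] assms(2-4)
  unfolding disjoint_def by blast

lemma val_const: "val_on (\<lambda>_. a) A = a"
  by (simp add: val_on_def)

lemma val_in: assumes "x \<in> A" shows "(SOME y. y \<in> A) \<in> A"
  using assms by (rule someI)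

lemma sep:
  assumes part: "partition_on UNIV Q" and E: "E a b"
    and psi: "proper_coloring E k \<psi>"
    and A: "A \<noteq> {}" "A \<subseteq> B" "B \<in> Q" "C \<in> Q"
    and eq: "\<forall>v\<in>V_part Q. \<phi> (val_on v A) = \<psi> (val_on v C)"
  shows "B = C"
proof (rule ccontr)
  assume ne: "B \<noteq> C"
  have BC: "B \<inter> C = {}" using part_disj[OF part A(3,4) ne] .
  have Cne: "C \<noteq> {}" using partition_onD3[OF part] A(4) by auto
  have "(\<lambda>_. a) \<in> V_part Q" by (auto simp: V_part_def)
  with eq have 1: "\<phi> a = \<psi> a" by (auto simp: val_const)
  define v2 where "v2 = (\<lambda>x. if x \<in> C then b else a)"
  have "v2 \<in> V_part Q"
    unfolding V_part_def
  proof (safe)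
    fix D assume D: "D \<in> Q"
    show "\<exists>c. \<forall>x\<in>D. v2 x = c"
    proof (cases "D = C")
      case True then show ?thesis by (auto simp: v2_def)
    next
      case False
      then have "D \<inter> C = {}" using part_disj[OF part D A(4)] by auto
      then show ?thesis by (auto simp: v2_def)
    qed
  qed
  with eq have 2: "\<phi> (val_on v2 A) = \<psi> (val_on v2 C)" by auto
  obtain x where x: "x \<in> A" using A(1) by auto
  have "(SOME y. y \<in> A) \<in> A" using val_in[OF x] .
  then have "val_on v2 A = a" using A(2) BC by (auto simp: val_on_def v2_def)
  moreover obtain y where y: "y \<in> C" using Cne by auto
  have "(SOME y. y \<in> C) \<in> C" using val_in[OF y] .
  then have "val_on v2 C = b" by (auto simp: val_on_def v2_def)
  ultimately have "\<phi> a = \<psi> b" using 2 by simp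
  with 1 have "\<psi> a = \<psi> b" by simp
  with psi E show False by (auto simp: proper_coloring_def)
qed

lemma exist:
  assumes tpc: "trivially_power_colorable E"
    and bpc: "big_power_coloring E (chromatic_number E) \<Phi>"
    and fp: "finite_partition P"
  shows "\<exists>A\<in>P. \<exists>\<phi>. proper_coloring E (chromatic_number E) \<phi> \<and>
            (\<forall>v\<in>V_part P. \<Phi> v = \<phi> (val_on v A))"
proof -
  obtain ps where ps: "set ps = P" "distinct ps"
    using finite_distinct_list fp unfolding finite_partition_def by blast
  define n where "n = length ps"
  have cover: "\<exists>j<n. x \<in> ps!j" for x
  proof -
    have "x \<in> \<Union>P" using partition_onD1 fp unfolding finite_partition_def by blast
    then obtain D where "D \<in> P" "x \<in> D" by auto
    then show ?thesis using ps(1) by (auto simp: in_set_conv_nth n_def)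
  qed
  define idx where "idx x = (SOME j. j < n \<and> x \<in> ps!j)" for x
  have idx: "idx x < n \<and> x \<in> ps ! idx x" for x
    unfolding idx_def using cover[of x] by (rule someI_ex)
  have npos: "n > 0" using idx[of undefined] by auto
  define vec where "vec w = (\<lambda>x. w ! idx x)" for w :: "'a list"
  define c where "c w = \<Phi> (vec w)" for w
  have pc: "power_coloring E n (chromatic_number E) c"
    unfolding power_coloring_def
  proof (intro conjI allI impI)
    fix v show "c v < chromatic_number E" using bpc by (simp add: c_def big_power_coloring_def)
  next
    fix v w :: "'a list" assume l: "length v = n" "length w = n" "list_all2 E v w"
    have "\<forall>x. E (vec v x) (vec w x)"
      using l idx by (auto simp: vec_def intro: list_all2_nthD)
    then show "c v \<noteq> c w" using bpc by (simp add: c_def big_power_coloring_def)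
  qed
  obtain i \<phi> where i: "i < n" "proper_coloring E (chromatic_number E) \<phi>"
      "\<forall>w. length w = n \<longrightarrow> c w = \<phi> (w ! i)"
    using tpc pc npos unfolding trivially_power_colorable_def by blast
  show ?thesis
  proof (intro bexI exI conjI ballI)
    show "ps ! i \<in> P" using i(1) ps(1) n_def by auto
    show "proper_coloring E (chromatic_number E) \<phi>" by (rule i(2))
    fix v :: "'b \<Rightarrow> 'a" assume v: "v \<in> V_part P"
    define w where "w = map (\<lambda>A. val_on v A) ps"
    have vw: "vec w = v"
    proof
      fix x
      have in1: "idx x < length ps" "x \<in> ps ! idx x" using idx n_def by auto
      then have "ps ! idx x \<in> P" using ps(1) by auto
      then obtain cc where cc: "\<forall>y\<in>ps ! idx x. v y = cc" using v by (auto simp: V_part_def)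
      have "(SOME y. y \<in> ps ! idx x) \<in> ps ! idx x" using val_in[OF in1(2)] .
      then show "vec w x = v x" using cc in1
        by (simp add: vec_def w_def val_on_def)
    qed
    have "\<Phi> v = c w" using vw by (simp add: c_def)
    also have "\<dots> = \<phi> (w ! i)" using i(3) by (simp add: w_def n_def)
    also have "\<dots> = \<phi> (val_on v (ps ! i))" using i(1) by (simp add: w_def n_def)
    finally show "\<Phi> v = \<phi> (val_on v (ps ! i))" .
  qed
qed

definition good where
  "good E \<Phi> P A \<longleftrightarrow> A \<in> P \<and> (\<exists>\<phi>. proper_coloring E (chromatic_number E) \<phi> \<and>
                         (\<forall>v\<in>V_part P. \<Phi> v = \<phi> (val_on v A)))"

lemma Igood:
  assumes tpc: "trivially_power_colorable E"
    and bpc: "big_power_coloring E (chromatic_number E) \<Phi>"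
    and fp: "finite_partition P" and E: "E a b"
  shows "good E \<Phi> P (I_part E \<Phi> P)"
proof -
  have part: "partition_on UNIV P" using fp by (simp add: finite_partition_def)
  have "\<exists>!A. good E \<Phi> P A"
  proof (rule ex_ex1I)
    show "\<exists>A. good E \<Phi> P A" using exist[OF tpc bpc fp] by (auto simp: good_def)
  next
    fix A C assume "good E \<Phi> P A" "good E \<Phi> P C"
    then obtain \<phi> \<psi> where A: "A \<in> P" "\<forall>v\<in>V_part P. \<Phi> v = \<phi> (val_on v A)"
      and C: "C \<in> P" "proper_coloring E (chromatic_number E) \<psi>" "\<forall>v\<in>V_part P. \<Phi> v = \<psi> (val_on v C)"
      by (auto simp: good_def)
    have "A \<noteq> {}" using partition_onD3[OF part] A(1) by auto
    then show "A = C"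
      using sep[OF part E C(2) _ subset_refl A(1) C(1), of \<phi>] A(2) C(3) by auto
  qed
  then show ?thesis unfolding I_part_def good_def[symmetric] by (rule theI')
qed

lemma refine:
  assumes tpc: "trivially_power_colorable E"
    and bpc: "big_power_coloring E (chromatic_number E) \<Phi>"
    and E: "E a b"
    and fR: "finite_partition R" and fP: "finite_partition P"
    and ref: "\<forall>X\<in>R. \<exists>Y\<in>P. X \<subseteq> Y"
  shows "I_part E \<Phi> R \<subseteq> I_part E \<Phi> P"
proof -
  obtain \<phi>R where R: "I_part E \<Phi> R \<in> R" "\<forall>v\<in>V_part R. \<Phi> v = \<phi>R (val_on v (I_part E \<Phi> R))"
    using Igood[OF tpc bpc fR E] by (auto simp: good_def)
  obtain \<phi>P where P: "I_part E \<Phi> P \<in> P" "proper_coloring E (chromatic_number E) \<phi>P"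
    "\<forall>v\<in>V_part P. \<Phi> v = \<phi>P (val_on v (I_part E \<Phi> P))"
    using Igood[OF tpc bpc fP E] by (auto simp: good_def)
  obtain Y where Y: "Y \<in> P" "I_part E \<Phi> R \<subseteq> Y" using ref R(1) by auto
  have sub: "V_part P \<subseteq> V_part R"
  proof
    fix v assume v: "v \<in> V_part P"
    show "v \<in> V_part R" unfolding V_part_def
    proof safe
      fix X assume "X \<in> R"
      then obtain Y' where "Y' \<in> P" "X \<subseteq> Y'" using ref by auto
      then show "\<exists>c. \<forall>x\<in>X. v x = c" using v by (auto simp: V_part_def) blast
    qed
  qed
  have partP: "partition_on UNIV P" using fP by (simp add: finite_partition_def)
  have ne: "I_part E \<Phi> R \<noteq> {}"
    using R(1) partition_onD3[of UNIV R] fR by (auto simp: finite_partition_def)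
  have "\<forall>v\<in>V_part P. \<phi>R (val_on v (I_part E \<Phi> R)) = \<phi>P (val_on v (I_part E \<Phi> P))"
    using R(2) P(3) sub by (metis subsetD)
  then have "Y = I_part E \<Phi> P" using sep[OF partP E P(2) ne Y(2) Y(1) P(1)] by blast
  then show ?thesis using Y by auto
qed

lemma common:
  assumes "finite_partition P" "finite_partition Q"
  shows "\<exists>R. finite_partition R \<and> (\<forall>X\<in>R. \<exists>Y\<in>P. X \<subseteq> Y) \<and> (\<forall>X\<in>R. \<exists>Y\<in>Q. X \<subseteq> Y)"
proof -
  define R where "R = {X \<inter> Y | X Y. X \<in> P \<and> Y \<in> Q \<and> X \<inter> Y \<noteq> {}}"
  have fin: "finite R"
  proof -
    have "R \<subseteq> (\<lambda>(X,Y). X \<inter> Y) ` (P \<times> Q)" by (auto simp: R_def)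
    moreover have "finite (P \<times> Q)" using assms by (simp add: finite_partition_def)
    ultimately show ?thesis by (meson finite_imageI finite_subset)
  qed
  have pP: "partition_on UNIV P" and pQ: "partition_on UNIV Q"
    using assms by (auto simp: finite_partition_def)
  have "partition_on UNIV R"
  proof (rule partition_onI)
    show "\<Union>R = UNIV"
    proof safe
      fix x :: 'a
      obtain X where "X \<in> P" "x \<in> X" using partition_onD1[OF pP] by blast
      moreover obtain Y where "Y \<in> Q" "x \<in> Y" using partition_onD1[OF pQ] by blast
      ultimately show "x \<in> \<Union>R" by (auto simp: R_def)
    qed auto
  next
    fix A B assume "A \<in> R" "B \<in> R" "A \<noteq> B"
    then obtain X Y X' Y' where "A = X \<inter> Y" "B = X' \<inter> Y'" "X \<in> P" "Y \<in> Q" "X' \<in> P" "Y' \<in> Q"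
      by (auto simp: R_def)
    moreover have "X \<noteq> X' \<or> Y \<noteq> Y'" using \<open>A \<noteq> B\<close> calculation by auto
    ultimately show "disjnt A B" using part_disj[OF pP] part_disj[OF pQ]
      unfolding disjnt_def by blast
  next
    show "{} \<notin> R" by (auto simp: R_def)
  qed
  then show ?thesis using fin by (intro exI[of _ R]) (auto simp: R_def finite_partition_def)
qed

lemma two_part:
  assumes "A \<noteq> {}" "A \<noteq> UNIV"
  shows "finite_partition {A, - A}"
  using assms unfolding finite_partition_def
  by (intro conjI partition_onI) (auto simp: disjnt_def)

lemma one_part: "finite_partition {UNIV}"
  unfolding finite_partition_def
  by (intro conjI partition_onI) auto

theorem mainTheorem18:
  fixes E :: "'v::finite \<Rightarrow> 'v \<Rightarrow> bool"
    and \<Phi> :: "('l \<Rightarrow> 'v) \<Rightarrow> nat"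
  assumes "simple_graph E"
    and "\<exists>a b. E a b"
    and "trivially_power_colorable E"
    and "infinite (UNIV :: 'l set)"
    and "big_power_coloring E (chromatic_number E) \<Phi>"
  shows "ultrafilter_on (UNIV :: 'l set) {I_part E \<Phi> P | P. finite_partition P}"
proof -
  obtain a b where E: "E a b" using assms(2) by auto
  note tpc = assms(3) and bpc = assms(5)
  define U where "U = {I_part E \<Phi> P | P :: 'l set set. finite_partition P}"
  have mem: "I_part E \<Phi> P \<in> P" if "finite_partition P" for P
    using Igood[OF tpc bpc that E] by (simp add: good_def)
  have nonempty: "I_part E \<Phi> P \<noteq> {}" if "finite_partition P" for P
    using mem[OF that] that partition_onD3[of UNIV P] by (auto simp: finite_partition_def)
  have univ: "UNIV \<in> U"
    using mem[OF one_part] one_part unfolding U_def by (metis (mono_tags, lifting) mem_Collect_eq singletonD)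
  have two: "B \<in> U \<or> - B \<in> U" if "B \<noteq> {}" "B \<noteq> UNIV" for B :: "'l set"
    using mem[OF two_part[OF that]] two_part[OF that] unfolding U_def by blast
  have up: "B \<in> U" if AU: "A \<in> U" and AB: "A \<subseteq> B" for A B :: "'l set"
  proof (cases "B = UNIV")
    case True then show ?thesis using univ by simp
  next
    case False
    obtain P where P: "finite_partition P" "A = I_part E \<Phi> P" using AU unfolding U_def by auto
    have Bne: "B \<noteq> {}" using nonempty[OF P(1)] P(2) AB by auto
    have Q: "finite_partition {B, -B}" using two_part[OF Bne False] .
    obtain R where R: "finite_partition R" "\<forall>X\<in>R. \<exists>Y\<in>P. X \<subseteq> Y" "\<forall>X\<in>R. \<exists>Y\<in>{B,-B}. X \<subseteq> Y"
      using common[OF P(1) Q] by blast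
    have 1: "I_part E \<Phi> R \<subseteq> A" using refine[OF tpc bpc E R(1) P(1) R(2)] P(2) by simp
    have 2: "I_part E \<Phi> R \<subseteq> I_part E \<Phi> {B,-B}" using refine[OF tpc bpc E R(1) Q R(3)] .
    have 3: "I_part E \<Phi> {B,-B} \<in> {B,-B}" using mem[OF Q] .
    have "I_part E \<Phi> {B,-B} = B"
    proof (rule ccontr)
      assume "I_part E \<Phi> {B,-B} \<noteq> B"
      then have "I_part E \<Phi> {B,-B} = -B" using 3 by auto
      then show False using 1 2 AB nonempty[OF R(1)] by auto
    qed
    then show ?thesis using Q unfolding U_def by (metis (mono_tags, lifting) mem_Collect_eq)
  qed
  show ?thesis
    unfolding ultrafilter_on_def U_def[symmetric]
  proof (intro conjI allI impI)
    show "U \<subseteq> Pow UNIV" by auto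
    show "UNIV \<in> U" by (rule univ)
    show "{} \<notin> U" using nonempty unfolding U_def by auto
  next
    fix A B assume "A \<in> U" "A \<subseteq> B" "B \<subseteq> UNIV" then show "B \<in> U" using up by blast
  next
    fix A B assume AB: "A \<in> U" "B \<in> U"
    obtain P where P: "finite_partition P" "A = I_part E \<Phi> P" using AB(1) unfolding U_def by auto
    obtain Q where Q: "finite_partition Q" "B = I_part E \<Phi> Q" using AB(2) unfolding U_def by auto
    obtain R where R: "finite_partition R" "\<forall>X\<in>R. \<exists>Y\<in>P. X \<subseteq> Y" "\<forall>X\<in>R. \<exists>Y\<in>Q. X \<subseteq> Y"
      using common[OF P(1) Q(1)] by blast
    have "I_part E \<Phi> R \<subseteq> A \<inter> B"
      using refine[OF tpc bpc E R(1) P(1) R(2)] refine[OF tpc bpc E R(1) Q(1) R(3)] P(2) Q(2) by auto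
    moreover have "I_part E \<Phi> R \<in> U" using R(1) U_def by auto
    ultimately show "A \<inter> B \<in> U" using up by blast
  next
    fix A :: "'l set" assume "A \<subseteq> UNIV"
    show "A \<in> U \<or> UNIV - A \<in> U"
    proof (cases "A = {}")
      case True then show ?thesis using univ by auto
    next
      case False
      show ?thesis
      proof (cases "A = UNIV")
        case True then show ?thesis using univ by auto
      next
        case False2: False
        show ?thesis using two[OF False False2] by (simp add: Compl_eq_Diff_UNIV)
      qed
    qed
  qed
qed

end
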